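(* For every integer $n\ge 9$, $\mathrm{wdim}_4(K_n\times K_n)\le 2n+1+\lfloor n/4\rfloor$.
   Context: $K_n\times K_n$ is the direct product of two complete graphs on $n$ vertices: vertex set $[n]\times[n]$ with $[n]=\{1,\dots,n\}$, and $(i,j)$ adjacent to $(i',j')$ iff $i\ne i'$ and $j\ne j'$. For a connected graph $G$ with distance $d_G$, vertices $x,y,z$ and $S\subseteq V(G)$, let $\Delta_z(x,y)=|d_G(x,z)-d_G(y,z)|$ and $\Delta_S(x,y)=\sum_{z\in S}\Delta_z(x,y)$. A set $S$ is a weak $k$-resolving set if $\Delta_S(x,y)\ge k$ for all distinct $x,y\in V(G)$, and $\mathrm{wdim}_k(G)$ is the minimum cardinality of a weak $k$-resolving set of $G$. *)

theory Defs
  imports Main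
begin

text \<open>A graph is given by a vertex set V and an adjacency relation E.
  The distance is the length of a shortest walk inside V (the graphs used
  here are connected, so the LEAST exists).\<close>

definition adjV :: "'a set \<Rightarrow> ('a \<Rightarrow> 'a \<Rightarrow> bool) \<Rightarrow> 'a \<Rightarrow> 'a \<Rightarrow> bool" where
  "adjV V E x y \<longleftrightarrow> x \<in> V \<and> y \<in> V \<and> E x y"

definition gdist :: "'a set \<Rightarrow> ('a \<Rightarrow> 'a \<Rightarrow> bool) \<Rightarrow> 'a \<Rightarrow> 'a \<Rightarrow> nat" where
  "gdist V E x y = (LEAST k. ((adjV V E) ^^ k) x y)"

definition Delta :: "'a set \<Rightarrow> ('a \<Rightarrow> 'a \<Rightarrow> bool) \<Rightarrow> 'a set \<Rightarrow> 'a \<Rightarrow> 'a \<Rightarrow> int" where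
  "Delta V E S x y = (\<Sum>z\<in>S. \<bar>int (gdist V E x z) - int (gdist V E y z)\<bar>)"

definition weak_k_resolving :: "'a set \<Rightarrow> ('a \<Rightarrow> 'a \<Rightarrow> bool) \<Rightarrow> nat \<Rightarrow> 'a set \<Rightarrow> bool" where
  "weak_k_resolving V E k S \<longleftrightarrow> S \<subseteq> V \<and>
     (\<forall>x\<in>V. \<forall>y\<in>V. x \<noteq> y \<longrightarrow> Delta V E S x y \<ge> int k)"

definition wdim :: "'a set \<Rightarrow> ('a \<Rightarrow> 'a \<Rightarrow> bool) \<Rightarrow> nat \<Rightarrow> nat" where
  "wdim V E k = (LEAST m. \<exists>S. weak_k_resolving V E k S \<and> card S = m)"

definition KxK_V :: "nat \<Rightarrow> (nat \<times> nat) set" where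
  "KxK_V n = {1..n} \<times> {1..n}"

definition KxK_E :: "(nat \<times> nat) \<Rightarrow> (nat \<times> nat) \<Rightarrow> bool" where
  "KxK_E p q \<longleftrightarrow> fst p \<noteq> fst q \<and> snd p \<noteq> snd q"

end

theory Submission
  imports Defs
begin


definition sg :: "nat \<Rightarrow> nat \<Rightarrow> nat" where
  "sg n i = (if i \<le> n div 2 then (if i = n div 2 then 1 else i + 1)
             else (if i = n then n div 2 + 1 else i + 1))"

definition tg :: "nat \<Rightarrow> nat \<Rightarrow> nat" where
  "tg n c = (if c \<le> n div 2 then (if c = 1 then n div 2 else c - 1)
             else (if c = n div 2 + 1 then n else c - 1))"

lemma sg_range: "n \<ge> 9 \<Longrightarrow> i \<in> {1..n} \<Longrightarrow> sg n i \<in> {1..n}"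
  unfolding sg_def by auto
lemma tg_range: "n \<ge> 9 \<Longrightarrow> i \<in> {1..n} \<Longrightarrow> tg n i \<in> {1..n}"
  unfolding tg_def by auto
lemma sg_ne: "n \<ge> 9 \<Longrightarrow> i \<in> {1..n} \<Longrightarrow> sg n i \<noteq> i"
  unfolding sg_def by auto
lemma tg_ne: "n \<ge> 9 \<Longrightarrow> i \<in> {1..n} \<Longrightarrow> tg n i \<noteq> i"
  unfolding tg_def by auto
lemma sg_block: "n \<ge> 9 \<Longrightarrow> i \<in> {1..n} \<Longrightarrow> (sg n i \<le> n div 2) = (i \<le> n div 2)"
  unfolding sg_def by auto
lemma tg_block: "n \<ge> 9 \<Longrightarrow> i \<in> {1..n} \<Longrightarrow> (tg n i \<le> n div 2) = (i \<le> n div 2)"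
  unfolding tg_def by auto
lemma sg_tg: "n \<ge> 9 \<Longrightarrow> i \<in> {1..n} \<Longrightarrow> sg n (tg n i) = i"
  unfolding sg_def tg_def by auto
lemma tg_sg: "n \<ge> 9 \<Longrightarrow> i \<in> {1..n} \<Longrightarrow> tg n (sg n i) = i"
  unfolding sg_def tg_def by auto
lemma sg_sg: "n \<ge> 9 \<Longrightarrow> i \<in> {1..n} \<Longrightarrow> sg n (sg n i) \<noteq> i"
  unfolding sg_def by auto
lemma sg_inj: "n \<ge> 9 \<Longrightarrow> i \<in> {1..n} \<Longrightarrow> k \<in> {1..n} \<Longrightarrow> sg n i = sg n k \<Longrightarrow> i = k"
  by (metis tg_sg)



lemma third: "n \<ge> 3 \<Longrightarrow> \<exists>e\<in>{1..n}. e \<noteq> a \<and> e \<noteq> (c::nat)"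
proof -
  assume "n \<ge> 3"
  then show ?thesis
  proof (cases "1 \<noteq> a \<and> 1 \<noteq> c")
    case True then show ?thesis using \<open>n \<ge> 3\<close> by (intro bexI[of _ 1]) auto
  next
    case F1: False
    show ?thesis
    proof (cases "2 \<noteq> a \<and> 2 \<noteq> c")
      case True then show ?thesis using \<open>n \<ge> 3\<close> by (intro bexI[of _ 2]) auto
    next
      case False then show ?thesis using F1 \<open>n \<ge> 3\<close> by (intro bexI[of _ 3]) auto
    qed
  qed
qed

definition dd :: "nat \<times> nat \<Rightarrow> nat \<times> nat \<Rightarrow> nat" where
  "dd x y = (if x = y then 0 else if KxK_E x y then 1 else 2)"

lemma gdist_eq:
  assumes n: "n \<ge> 3" and x: "x \<in> KxK_V n" and y: "y \<in> KxK_V n"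
  shows "gdist (KxK_V n) KxK_E x y = dd x y"
proof -
  let ?R = "adjV (KxK_V n) KxK_E"
  have P0: "(?R ^^ 0) x y \<longleftrightarrow> x = y" by simp
  have P1: "(?R ^^ 1) x y \<longleftrightarrow> KxK_E x y" unfolding relpowp_1 using x y by (simp add: adjV_def)
  show ?thesis
  proof (cases "x = y")
    case True
    then show ?thesis unfolding gdist_def dd_def
      by (intro Least_equality) (auto intro: relpowp_0_I)
  next
    case ne: False
    show ?thesis
    proof (cases "KxK_E x y")
      case True
      have "(LEAST k. (?R ^^ k) x y) = 1"
      proof (intro Least_equality)
        show "(?R ^^ 1) x y" using P1 True by simp
        fix k assume "(?R ^^ k) x y"
        then show "1 \<le> k" using P0 ne by (cases k) auto
      qed
      then show ?thesis unfolding gdist_def dd_def using ne True by simp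
    next
      case False
      obtain a b c d where xy: "x = (a,b)" "y = (c,d)" by fastforce
      obtain e where e: "e \<in> {1..n}" "e \<noteq> a" "e \<noteq> c" using third[OF n] by blast
      obtain f where f: "f \<in> {1..n}" "f \<noteq> b" "f \<noteq> d" using third[OF n] by blast
      have R1: "?R x (e,f)" using x e f xy by (auto simp: adjV_def KxK_E_def KxK_V_def)
      have R2: "?R (e,f) y" using y e f xy by (auto simp: adjV_def KxK_E_def KxK_V_def)
      have P2: "(?R ^^ 2) x y"
        using relpowp_Suc_I[OF relpowp_Suc_I[OF relpowp_0_I[of ?R x] R1] R2] by (simp add: numeral_2_eq_2)
      have "(LEAST k. (?R ^^ k) x y) = 2"
      proof (rule Least_equality)
        show "(?R ^^ 2) x y" by (rule P2)
        fix k assume "(?R ^^ k) x y"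
        then show "2 \<le> k" using P0 P1 ne False
          by (cases k; cases "k - 1"; auto)
      qed
      then show ?thesis unfolding gdist_def dd_def using ne False by simp
    qed
  qed
qed



definition S0 :: "nat \<Rightarrow> (nat \<times> nat) set" where
  "S0 n = {(i,j). i \<in> {1..n} \<and> (j = i \<or> j = sg n i)}"
definition Ex :: "nat \<Rightarrow> (nat \<times> nat) set" where
  "Ex n = (\<lambda>t. (min (2*t+1) (n div 2), n div 2 + 2*t+1)) ` {..< (n - n div 2 + 1) div 2}"
definition SS :: "nat \<Rightarrow> (nat \<times> nat) set" where
  "SS n = S0 n \<union> Ex n"

abbreviation RC where "RC S i \<equiv> card (S \<inter> {z. fst z = i})"
abbreviation CC where "CC S j \<equiv> card (S \<inter> {z. snd z = j})"

lemma Ex_mem: "n \<ge> 9 \<Longrightarrow> (a,b) \<in> Ex n \<Longrightarrow> 1 \<le> a \<and> a \<le> n div 2 \<and> n div 2 < b \<and> b \<le> n"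
  unfolding Ex_def by auto

lemma S0_sub: "n \<ge> 9 \<Longrightarrow> S0 n \<subseteq> KxK_V n"
  unfolding S0_def KxK_V_def using sg_range by auto

lemma SS_sub: "n \<ge> 9 \<Longrightarrow> SS n \<subseteq> KxK_V n"
  unfolding SS_def KxK_V_def using S0_sub[of n] Ex_mem[of n] unfolding KxK_V_def
  by fastforce

lemma fin_SS: "n \<ge> 9 \<Longrightarrow> finite (SS n)"
  using SS_sub[of n] finite_subset unfolding KxK_V_def by blast

lemma card_SS: assumes n: "n \<ge> 9" shows "card (SS n) \<le> 2 * n + 1 + n div 4"
proof -
  have "S0 n = (\<lambda>i. (i,i)) ` {1..n} \<union> (\<lambda>i. (i, sg n i)) ` {1..n}"
    unfolding S0_def by auto
  moreover have "card ((\<lambda>i. (i,i)) ` {1..n}) \<le> n"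
    using card_image_le[of "{1..n}" "\<lambda>i. (i,i)"] by simp
  moreover have "card ((\<lambda>i. (i, sg n i)) ` {1..n}) \<le> n"
    using card_image_le[of "{1..n}" "\<lambda>i. (i, sg n i)"] by simp
  ultimately have "card (S0 n) \<le> n + n"
    using card_Un_le[of "(\<lambda>i. (i,i)) ` {1..n}" "(\<lambda>i. (i, sg n i)) ` {1..n}"] by simp
  moreover have "card (Ex n) \<le> (n - n div 2 + 1) div 2"
    unfolding Ex_def using card_image_le[of "{..< (n - n div 2 + 1) div 2}"] by simp
  moreover have "(n - n div 2 + 1) div 2 \<le> n div 4 + 1"
  proof -
    define q r where "q = n div 4" and "r = n mod 4"
    have qr: "n = 4*q + r" "r < 4" unfolding q_def r_def by auto
    have "r = 0 \<or> r = 1 \<or> r = 2 \<or> r = 3" using qr by auto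
    then show ?thesis using qr by auto
  qed
  ultimately show ?thesis unfolding SS_def
    using card_Un_le[of "S0 n" "Ex n"] by linarith
qed

lemma card3: "finite B \<Longrightarrow> {a,b,c} \<subseteq> B \<Longrightarrow> a \<noteq> b \<Longrightarrow> a \<noteq> c \<Longrightarrow> b \<noteq> c \<Longrightarrow> 3 \<le> card B"
  by (metis card_mono card_3_iff)
lemma card2: "finite B \<Longrightarrow> {a,b} \<subseteq> B \<Longrightarrow> a \<noteq> b \<Longrightarrow> 2 \<le> card B"
  by (metis card_mono card_2_iff)

lemma row2: assumes n: "n \<ge> 9" and i: "i \<in> {1..n}" shows "2 \<le> RC (SS n) i"
  by (rule card2[of _ "(i,i)" "(i, sg n i)"]) (use n i fin_SS[OF n] sg_ne[OF n i] sg_range[OF n i] in \<open>auto simp: SS_def S0_def\<close>)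

lemma col2: assumes n: "n \<ge> 9" and i: "i \<in> {1..n}" shows "2 \<le> CC (SS n) i"
  by (rule card2[of _ "(i,i)" "(tg n i, i)"]) (use n i fin_SS[OF n] tg_ne[OF n i] tg_range[OF n i] sg_tg[OF n i] in \<open>auto simp: SS_def S0_def\<close>)

lemma rowE: assumes n: "n \<ge> 9" and e: "(a,b) \<in> Ex n" shows "3 \<le> RC (SS n) a"
proof -
  have a: "a \<in> {1..n}" "a \<le> n div 2" "n div 2 < b" using Ex_mem[OF n e] by auto
  have "sg n a \<le> n div 2" using sg_block[OF n a(1)] a by simp
  then show ?thesis
    by (intro card3[of _ "(a,a)" "(a, sg n a)" "(a,b)"]) (use n a e fin_SS[OF n] sg_ne[OF n a(1)] in \<open>auto simp: SS_def S0_def\<close>)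
qed

lemma colE: assumes n: "n \<ge> 9" and e: "(a,b) \<in> Ex n" shows "3 \<le> CC (SS n) b"
proof -
  have a: "b \<in> {1..n}" "a \<le> n div 2" "n div 2 < b" using Ex_mem[OF n e] by auto
  have "\<not> tg n b \<le> n div 2" using tg_block[OF n a(1)] a by simp
  then show ?thesis
    by (intro card3[of _ "(b,b)" "(tg n b, b)" "(a,b)"]) (use n a e fin_SS[OF n] tg_ne[OF n a(1)] tg_range[OF n a(1)] sg_tg[OF n a(1)] in \<open>auto simp: SS_def S0_def\<close>)
qed

lemma oddrow: assumes n: "n \<ge> 9" and r: "odd r" "1 \<le> r" "r \<le> n div 2" shows "(r, n div 2 + r) \<in> Ex n"
proof -
  obtain t where t: "r = 2*t+1" using r(1) oddE by blast
  have "n div 2 \<le> n - n div 2" by simp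
  moreover have "2*(t+1) = 2*t+1+1" by simp
  ultimately have "2*(t+1) \<le> n - n div 2 + 1" using t r by linarith
  then have "(2*(t+1)) div 2 \<le> (n - n div 2 + 1) div 2" by (rule div_le_mono)
  then have "t < (n - n div 2 + 1) div 2" by simp
  then show ?thesis unfolding Ex_def using t r by (intro image_eqI[of _ _ t]) auto
qed

lemma oddcol: assumes n: "n \<ge> 9" and r: "odd c" "1 \<le> c" "c \<le> n - n div 2" shows "(min c (n div 2), n div 2 + c) \<in> Ex n"
proof -
  obtain t where t: "c = 2*t+1" using r(1) oddE by blast
  have "n div 2 \<le> n - n div 2" by simp
  moreover have "2*(t+1) = 2*t+1+1" by simp
  ultimately have "2*(t+1) \<le> n - n div 2 + 1" using t r by linarith
  then have "(2*(t+1)) div 2 \<le> (n - n div 2 + 1) div 2" by (rule div_le_mono)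
  then have "t < (n - n div 2 + 1) div 2" by simp
  then show ?thesis unfolding Ex_def using t r by (intro image_eqI[of _ _ t]) auto
qed

lemma Lrow: assumes n: "n \<ge> 9" and k: "1 \<le> k" "k \<le> n div 2"
  shows "3 \<le> RC (SS n) k \<or> 3 \<le> RC (SS n) (sg n k)"
proof (cases "odd k")
  case True then show ?thesis using rowE[OF n oddrow[OF n True k]] by simp
next
  case False
  have "odd (sg n k) \<and> 1 \<le> sg n k \<and> sg n k \<le> n div 2"
    using False k unfolding sg_def by auto
  then show ?thesis using rowE[OF n oddrow[OF n]] by blast
qed

lemma Lcol: assumes n: "n \<ge> 9" and k: "n div 2 < k" "k \<le> n"
  shows "3 \<le> CC (SS n) k \<or> 3 \<le> CC (SS n) (sg n k)"
proof (cases "odd (k - n div 2)")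
  case True
  have "(min (k - n div 2) (n div 2), n div 2 + (k - n div 2)) \<in> Ex n"
    by (rule oddcol[OF n True]) (use k in auto)
  then show ?thesis using colE[OF n] k by fastforce
next
  case False
  have s: "odd (sg n k - n div 2) \<and> 1 \<le> sg n k - n div 2 \<and> sg n k - n div 2 \<le> n - n div 2"
    using False k unfolding sg_def by auto
  have "(min (sg n k - n div 2) (n div 2), n div 2 + (sg n k - n div 2)) \<in> Ex n"
    using oddcol[OF n] s by blast
  moreover have "n div 2 + (sg n k - n div 2) = sg n k" using k unfolding sg_def by auto
  ultimately show ?thesis using colE[OF n] by fastforce
qed



lemma Lshape:
  assumes n: "n \<ge> 9" and h: "(i,j) \<in> S0 n" "(i,j') \<in> S0 n" "(i',j) \<in> S0 n" and d: "i \<noteq> i'" "j \<noteq> j'"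
  shows "3 \<le> RC (SS n) i \<or> 3 \<le> RC (SS n) i' \<or> 3 \<le> CC (SS n) j \<or> 3 \<le> CC (SS n) j'"
proof -
  have i: "i \<in> {1..n}" and i': "i' \<in> {1..n}" using h unfolding S0_def by auto
  have hj: "j = i \<or> j = sg n i" "j' = i \<or> j' = sg n i" "j = i' \<or> j = sg n i'"
    using h unfolding S0_def by auto
  show ?thesis
  proof (cases "j = i")
    case True
    then have j': "j' = sg n i" and s: "sg n i' = i" using hj d by auto
    show ?thesis
    proof (cases "i \<le> n div 2")
      case True
      then have "i' \<le> n div 2" using sg_block[OF n i'] s by simp
      then have "1 \<le> i'" "i' \<le> n div 2" using i' by auto
      then show ?thesis using Lrow[OF n, of i'] s by auto
    next
      case False
      then show ?thesis using Lcol[OF n, of i] i j' \<open>j = i\<close> by auto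
    qed
  next
    case False
    then have j: "j = sg n i" and j': "j' = i" using hj d by auto
    have "i' = sg n i" using hj(3) j d sg_inj[OF n i' i] by auto
    show ?thesis
    proof (cases "i \<le> n div 2")
      case True
      then show ?thesis using Lrow[OF n, of i] i \<open>i' = sg n i\<close> by auto
    next
      case False
      then show ?thesis using Lcol[OF n, of i] i j j' by auto
    qed
  qed
qed

lemma norect:
  assumes n: "n \<ge> 9" and h: "(i,j) \<in> S0 n" "(i,j') \<in> S0 n" "(i',j) \<in> S0 n" "(i',j') \<in> S0 n"
    and d: "i \<noteq> i'" "j \<noteq> j'"
  shows False
proof -
  have i: "i \<in> {1..n}" and i': "i' \<in> {1..n}" using h unfolding S0_def by auto
  have hj: "j = i \<or> j = sg n i" "j' = i \<or> j' = sg n i" "j = i' \<or> j = sg n i'" "j' = i' \<or> j' = sg n i'"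
    using h unfolding S0_def by auto
  have inj: "sg n i' = sg n i \<Longrightarrow> i' = i" using sg_inj[OF n i' i] .
  show False
  proof (cases "j = i")
    case True
    then have "j' = sg n i" "sg n i' = i" "j' = i'" using hj d by auto
    then show False using sg_sg[OF n i] by simp
  next
    case False
    then have "j = sg n i" "j' = i" using hj d by auto
    then have "i' = sg n i" using hj(3) inj d by auto
    then show False using hj(4) \<open>j' = i\<close> d sg_sg[OF n i] by auto
  qed
qed



lemma comb:
  assumes n: "n \<ge> 9" and ij: "i \<in> {1..n}" "i' \<in> {1..n}" "j \<in> {1..n}" "j' \<in> {1..n}"
    and d: "i \<noteq> i'" "j \<noteq> j'"
  shows "4 + 2 * of_bool ((i,j') \<in> SS n) + 2 * of_bool ((i',j) \<in> SS n)
          + of_bool ((i,j) \<in> SS n) + of_bool ((i',j') \<in> SS n)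
         \<le> (int (RC (SS n) i) + int (RC (SS n) i') + int (CC (SS n) j) + int (CC (SS n) j') :: int)"
    (is "?L \<le> ?R")
proof -
  have r: "2 \<le> RC (SS n) i" "2 \<le> RC (SS n) i'" "2 \<le> CC (SS n) j" "2 \<le> CC (SS n) j'"
    using row2[OF n ij(1)] row2[OF n ij(2)] col2[OF n ij(3)] col2[OF n ij(4)] by auto
  have L10: "?L \<le> 10" by (simp add: of_bool_def)
  show ?thesis
  proof (cases "(i,j') \<in> SS n \<and> (i',j) \<in> SS n \<and> ((i,j) \<in> SS n \<or> (i',j') \<in> SS n)")
    case False
    then have "?L \<le> 8" by (auto simp: of_bool_def)
    then show ?thesis using r by linarith
  next
    case q: True
    show ?thesis
    proof (cases "(i,j') \<in> Ex n \<or> (i',j) \<in> Ex n \<or> (i,j) \<in> Ex n \<or> (i',j') \<in> Ex n")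
      case True
      then have "(3 \<le> RC (SS n) i \<or> 3 \<le> RC (SS n) i') \<and> (3 \<le> CC (SS n) j \<or> 3 \<le> CC (SS n) j')"
        using rowE[OF n] colE[OF n] by blast
      then show ?thesis using r L10 by linarith
    next
      case False
      then have s: "(i,j') \<in> S0 n" "(i',j) \<in> S0 n" using q unfolding SS_def by auto
      show ?thesis
      proof (cases "(i,j) \<in> SS n")
        case True
        then have x: "(i,j) \<in> S0 n" using False unfolding SS_def by auto
        have "(i',j') \<notin> S0 n" using norect[OF n x s(1) s(2) _ d] by blast
        then have "(i',j') \<notin> SS n" using False unfolding SS_def by auto
        then have "?L = 9" using True q by simp
        moreover have "3 \<le> RC (SS n) i \<or> 3 \<le> RC (SS n) i' \<or> 3 \<le> CC (SS n) j \<or> 3 \<le> CC (SS n) j'"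
          using Lshape[OF n x s d] .
        ultimately show ?thesis using r by linarith
      next
        case nx: False
        then have y: "(i',j') \<in> S0 n" using q False unfolding SS_def by auto
        then have "?L = 9" using nx q by simp
        moreover have "3 \<le> RC (SS n) i' \<or> 3 \<le> RC (SS n) i \<or> 3 \<le> CC (SS n) j' \<or> 3 \<le> CC (SS n) j"
          using Lshape[OF n y _ _] s d by (metis)
        ultimately show ?thesis using r by linarith
      qed
    qed
  qed
qed

lemma pw_gen:
  assumes d: "i \<noteq> i'" "j \<noteq> j'"
  shows "of_bool (fst z = i) + of_bool (snd z = j) + of_bool (fst z = i') + of_bool (snd z = j')
     - 2 * of_bool (z = (i,j')) - 2 * of_bool (z = (i',j)) - of_bool (z = (i,j)) - of_bool (z = (i',j'))
     \<le> \<bar>int (dd (i,j) z) - int (dd (i',j') z)\<bar>"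
proof -
  obtain a b where z: "z = (a,b)" by fastforce
  show ?thesis unfolding z dd_def KxK_E_def using d by (auto simp: of_bool_def)
qed

lemma pw_row:
  assumes d: "j \<noteq> j'"
  shows "of_bool (snd z = j) + of_bool (snd z = j') \<le> \<bar>int (dd (i,j) z) - int (dd (i,j') z)\<bar>"
proof -
  obtain a b where z: "z = (a,b)" by fastforce
  show ?thesis unfolding z dd_def KxK_E_def using d by (auto simp: of_bool_def)
qed

lemma pw_col:
  assumes d: "i \<noteq> i'"
  shows "of_bool (fst z = i) + of_bool (fst z = i') \<le> \<bar>int (dd (i,j) z) - int (dd (i',j) z)\<bar>"
proof -
  obtain a b where z: "z = (a,b)" by fastforce
  show ?thesis unfolding z dd_def KxK_E_def using d by (auto simp: of_bool_def)
qed



lemma sum_delta_int: "finite A \<Longrightarrow> (\<Sum>z\<in>A. of_bool (z = p) :: int) = of_bool (p \<in> A)"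
  by (simp add: of_bool_def)

lemma resolving: assumes n: "n \<ge> 9" shows "weak_k_resolving (KxK_V n) KxK_E 4 (SS n)"
  unfolding weak_k_resolving_def
proof (intro conjI ballI impI)
  show "SS n \<subseteq> KxK_V n" using SS_sub[OF n] .
  fix x y assume x: "x \<in> KxK_V n" and y: "y \<in> KxK_V n" and xy: "x \<noteq> y"
  obtain i j i' j' where xe: "x = (i,j)" and ye: "y = (i',j')" by fastforce
  have ij: "i \<in> {1..n}" "j \<in> {1..n}" "i' \<in> {1..n}" "j' \<in> {1..n}"
    using x y xe ye unfolding KxK_V_def by auto
  have fin: "finite (SS n)" using fin_SS[OF n] .
  have n3: "n \<ge> 3" using n by simp
  have D: "Delta (KxK_V n) KxK_E (SS n) x y = (\<Sum>z\<in>SS n. \<bar>int (dd x z) - int (dd y z)\<bar>)"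
    unfolding Delta_def
    using gdist_eq[OF n3 x] gdist_eq[OF n3 y] SS_sub[OF n] by (intro sum.cong) auto
  let ?S = "SS n"
  have cR: "\<And>k. (\<Sum>z\<in>?S. of_bool (fst z = k) :: int) = int (RC ?S k)"
    using fin by simp
  have cC: "\<And>k. (\<Sum>z\<in>?S. of_bool (snd z = k) :: int) = int (CC ?S k)"
    using fin by simp
  show "int 4 \<le> Delta (KxK_V n) KxK_E (SS n) x y"
  proof (cases "i = i'")
    case True
    then have jj: "j \<noteq> j'" using xy xe ye by auto
    have "(\<Sum>z\<in>?S. of_bool (snd z = j) + of_bool (snd z = j') :: int) \<le> (\<Sum>z\<in>?S. \<bar>int (dd x z) - int (dd y z)\<bar>)"
      using pw_row[OF jj] xe ye True by (intro sum_mono) auto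
    moreover have "(\<Sum>z\<in>?S. of_bool (snd z = j) + of_bool (snd z = j') :: int) = int (CC ?S j) + int (CC ?S j')"
      by (simp only: sum.distrib cC)
    ultimately show ?thesis using D col2[OF n ij(2)] col2[OF n ij(4)] by linarith
  next
    case ii: False
    show ?thesis
    proof (cases "j = j'")
      case True
      have "(\<Sum>z\<in>?S. of_bool (fst z = i) + of_bool (fst z = i') :: int) \<le> (\<Sum>z\<in>?S. \<bar>int (dd x z) - int (dd y z)\<bar>)"
        using pw_col[OF ii] xe ye True by (intro sum_mono) auto
      moreover have "(\<Sum>z\<in>?S. of_bool (fst z = i) + of_bool (fst z = i') :: int) = int (RC ?S i) + int (RC ?S i')"
        by (simp only: sum.distrib cR)
      ultimately show ?thesis using D row2[OF n ij(1)] row2[OF n ij(3)] by linarith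
    next
      case jj: False
      let ?e = "\<lambda>z. of_bool (fst z = i) + of_bool (snd z = j) + of_bool (fst z = i') + of_bool (snd z = j')
         - 2 * of_bool (z = (i,j')) - 2 * of_bool (z = (i',j)) - of_bool (z = (i,j)) - of_bool (z = (i',j')) :: int"
      have "(\<Sum>z\<in>?S. ?e z) \<le> (\<Sum>z\<in>?S. \<bar>int (dd x z) - int (dd y z)\<bar>)"
        using pw_gen[OF ii jj] xe ye by (intro sum_mono) auto
      moreover have "(\<Sum>z\<in>?S. ?e z) = int (RC ?S i) + int (CC ?S j) + int (RC ?S i') + int (CC ?S j')
         - 2 * of_bool ((i,j') \<in> ?S) - 2 * of_bool ((i',j) \<in> ?S) - of_bool ((i,j) \<in> ?S) - of_bool ((i',j') \<in> ?S)"
        by (simp only: sum.distrib sum_subtractf sum_distrib_left[symmetric] cR cC sum_delta_int[OF fin])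
      moreover have "4 + 2 * of_bool ((i,j') \<in> ?S) + 2 * of_bool ((i',j) \<in> ?S)
          + of_bool ((i,j) \<in> ?S) + of_bool ((i',j') \<in> ?S)
         \<le> (int (RC ?S i) + int (RC ?S i') + int (CC ?S j) + int (CC ?S j') :: int)"
        using comb[OF n ij(1) ij(3) ij(2) ij(4) ii jj] .
      ultimately show ?thesis using D by linarith
    qed
  qed
qed

theorem mainTheorem5:
  fixes n :: nat
  assumes "n \<ge> 9"
  shows "wdim (KxK_V n) KxK_E 4 \<le> 2 * n + 1 + n div 4"
proof -
  have "wdim (KxK_V n) KxK_E 4 \<le> card (SS n)"
    unfolding wdim_def using resolving[OF assms] by (intro Least_le) blast
  then show ?thesis using card_SS[OF assms] by linarith
qed

end
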